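(* Suppose $(X_i,Y_i)$, $i=1,\dots,n$, are i.i.d. from $P$ and $(X_{n+j},Y_{n+j})$, $j=1,\dots,m$, are i.i.d. from $Q$, independently, where $\frac{dQ}{dP}(x,y)=w(x)$ for a known $w:\mathcal{X}\to(0,\infty)$. Let $f$, a risk map $\mathcal{L}(f,x,y)\in[0,1]$ and a score $s:\mathcal{X}\to[0,1]$ be fixed, $L_i=\mathcal{L}(f,X_i,Y_i)$. Then for any fixed $\gamma\in(0,1)$ and every $j\in\{1,\dots,m\}$, the weighted e-value $E_{\gamma,n+j}$ defined below satisfies $E_{\gamma,n+j}\ge0$ and $\mathbb{E}[L_{n+j}E_{\gamma,n+j}]\le1$.
   Context: Let $w_i=w(X_i)$ for $i\in[n+m]$, $\mathcal{M}=\{s(X_i)\}_{i=1}^{n+m}$, $$\mathrm{FR}_{n+j}(t;\ell)=\frac{w_{n+j}\ell\mathbf{1}\{s(X_{n+j})\le t\}+\sum_{i=1}^nw_iL_i\mathbf{1}\{s(X_i)\le t\}}{1+\sum_{k\ne j}\mathbf{1}\{s(X_{n+k})\le t\}}\cdot\frac{m}{w_{n+j}+\sum_{i=1}^nw_i},$$ $t_{\gamma,n+j}(\ell)=\max\{t\in\mathcal{M}:\mathrm{FR}_{n+j}(t;\ell)\le\gamma\}$ ($\max\emptyset=-\infty$), and $$E_{\gamma,n+j}=\inf_{\ell\in[0,1]}\frac{\mathbf{1}\{s(X_{n+j})\le t_{\gamma,n+j}(\ell)\}(w_{n+j}+\sum_{i=1}^nw_i)}{w_{n+j}\ell\mathbf{1}\{s(X_{n+j})\le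 t_{\gamma,n+j}(\ell)\}+\sum_{i=1}^nw_iL_i\mathbf{1}\{s(X_i)\le t_{\gamma,n+j}(\ell)\}},$$ each ratio $0$ when its numerator is $0$ and $+\infty$ when the numerator is positive and denominator $0$; $E_{\gamma,n+j}=0$ if $\inf_\ell t_{\gamma,n+j}(\ell)=-\infty$. *)

theory Defs
  imports "HOL-Probability.Probability"
begin

text \<open>Realised data: wv i = w(X_i), sv i = s(X_i), Lv i = L_i for i in 1..n+m
  (indices 1..n calibration, n+1..n+m test).\<close>

definition FR :: "nat \<Rightarrow> nat \<Rightarrow> (nat \<Rightarrow> real) \<Rightarrow> (nat \<Rightarrow> real) \<Rightarrow> (nat \<Rightarrow> real)
    \<Rightarrow> nat \<Rightarrow> real \<Rightarrow> real \<Rightarrow> real" where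
  "FR n m wv sv Lv j t l =
     ((wv (n+j) * l * (if sv (n+j) \<le> t then 1 else 0)
        + (\<Sum>i=1..n. wv i * Lv i * (if sv i \<le> t then 1 else 0)))
      / (1 + real (card {k\<in>{1..m}. k \<noteq> j \<and> sv (n+k) \<le> t})))
     * (real m / (wv (n+j) + (\<Sum>i=1..n. wv i)))"

definition score_set :: "nat \<Rightarrow> nat \<Rightarrow> (nat \<Rightarrow> real) \<Rightarrow> real set" where
  "score_set n m sv = sv ` {1..n+m}"

definition tgam :: "nat \<Rightarrow> nat \<Rightarrow> (nat \<Rightarrow> real) \<Rightarrow> (nat \<Rightarrow> real) \<Rightarrow> (nat \<Rightarrow> real)
    \<Rightarrow> real \<Rightarrow> nat \<Rightarrow> real \<Rightarrow> ereal" where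
  "tgam n m wv sv Lv \<gamma> j l =
     (let T = {t \<in> score_set n m sv. FR n m wv sv Lv j t l \<le> \<gamma>}
      in if T = {} then -\<infinity> else ereal (Max T))"

definition Eratio :: "nat \<Rightarrow> nat \<Rightarrow> (nat \<Rightarrow> real) \<Rightarrow> (nat \<Rightarrow> real) \<Rightarrow> (nat \<Rightarrow> real)
    \<Rightarrow> real \<Rightarrow> nat \<Rightarrow> real \<Rightarrow> ereal" where
  "Eratio n m wv sv Lv \<gamma> j l =
     (let t = tgam n m wv sv Lv \<gamma> j l;
          num = (if ereal (sv (n+j)) \<le> t then 1 else 0) * (wv (n+j) + (\<Sum>i=1..n. wv i));
          den = wv (n+j) * l * (if ereal (sv (n+j)) \<le> t then 1 else 0)
                + (\<Sum>i=1..n. wv i * Lv i * (if ereal (sv i) \<le> t then 1 else 0))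
      in if num = 0 then 0 else if den = 0 then \<infinity> else ereal (num / den))"

definition Evalue :: "nat \<Rightarrow> nat \<Rightarrow> (nat \<Rightarrow> real) \<Rightarrow> (nat \<Rightarrow> real) \<Rightarrow> (nat \<Rightarrow> real)
    \<Rightarrow> real \<Rightarrow> nat \<Rightarrow> ereal" where
  "Evalue n m wv sv Lv \<gamma> j =
     (if (INF l\<in>{0..1}. tgam n m wv sv Lv \<gamma> j l) = -\<infinity> then 0
      else (INF l\<in>{0..1}. Eratio n m wv sv Lv \<gamma> j l))"

end

theory Submission
  imports Defs
begin


lemma card_sum_ind: "finite A \<Longrightarrow> real (card {k\<in>A. P k}) = (\<Sum>k\<in>A. if P k then 1 else 0)"
  by (simp add: sum.If_cases Int_def conj_commute)

lemma max_if_eq: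
  fixes f :: "nat \<Rightarrow> real"
  assumes "finite A" "A \<noteq> {}"
  shows "(if {t \<in> f ` A. P t} = {} then -\<infinity> else ereal (Max {t \<in> f ` A. P t}))
       = Max ((\<lambda>r. if P (f r) then ereal (f r) else -\<infinity>) ` A)"
proof (cases "{t \<in> f ` A. P t} = {}")
  case True
  then have "(\<lambda>r. if P (f r) then ereal (f r) else -\<infinity>) ` A = {-\<infinity>}" using assms by auto
  then show ?thesis using True by (simp only: if_True Max_singleton simp_thms)
next
  case False
  let ?S = "{t \<in> f ` A. P t}"
  have fin: "finite ?S" using assms by auto
  have mem: "Max ?S \<in> ?S" using Max_in[OF fin False] .
  then obtain r0 where r0: "r0 \<in> A" "P (f r0)" "f r0 = Max ?S" by auto
  have "Max ((\<lambda>r. if P (f r) then ereal (f r) else -\<infinity>) ` A) = ereal (Max ?S)"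
  proof (rule Max_eqI)
    show "finite ((\<lambda>r. if P (f r) then ereal (f r) else -\<infinity>) ` A)" using assms by auto
    fix y assume "y \<in> (\<lambda>r. if P (f r) then ereal (f r) else -\<infinity>) ` A"
    then obtain r where r: "r \<in> A" "y = (if P (f r) then ereal (f r) else -\<infinity>)" by auto
    show "y \<le> ereal (Max ?S)"
    proof (cases "P (f r)")
      case True
      then have "f r \<in> ?S" using r by auto
      then show ?thesis using r True Max_ge[OF fin] by auto
    qed (use r in auto)
  next
    show "ereal (Max ?S) \<in> (\<lambda>r. if P (f r) then ereal (f r) else -\<infinity>) ` A"
      using r0 by (auto intro!: image_eqI[where x=r0])
  qed
  then show ?thesis using False by simp
qed

lemma tgam_Max:
  assumes "m \<ge> 1"
  shows "tgam n m wv sv Lv \<gamma> j l =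
    Max ((\<lambda>r. if FR n m wv sv Lv j (sv r) l \<le> \<gamma> then ereal (sv r) else -\<infinity>) ` {1..n+m})"
  unfolding tgam_def score_set_def Let_def
  by (rule max_if_eq[where P = "\<lambda>t. FR n m wv sv Lv j t l \<le> \<gamma>"]) (use assms in auto)

lemma FR_alt:
  "FR n m wv sv Lv j t l =
     ((wv (n+j) * l * (if sv (n+j) \<le> t then 1 else 0)
        + (\<Sum>i=1..n. wv i * Lv i * (if sv i \<le> t then 1 else 0)))
      / (1 + (\<Sum>k\<in>{1..m}. if k \<noteq> j \<and> sv (n+k) \<le> t then 1 else 0)))
     * (real m / (wv (n+j) + (\<Sum>i=1..n. wv i)))"
  unfolding FR_def by (subst card_sum_ind) auto

lemma Eratio_meas:
  fixes N :: "'b measure"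
  assumes m: "m \<ge> 1"
  assumes wm: "\<And>i. (\<lambda>b. wfn i b) \<in> borel_measurable N"
      and sm: "\<And>i. (\<lambda>b. sf i b) \<in> borel_measurable N"
      and Lm: "\<And>i. (\<lambda>b. Lf i b) \<in> borel_measurable N"
      and lm: "l \<in> borel_measurable N"
  shows "(\<lambda>b. Eratio n m (\<lambda>i. wfn i b) (\<lambda>i. sf i b) (\<lambda>i. Lf i b) \<gamma> j (l b)) \<in> borel_measurable N"
proof -
  note [measurable] = wm sm Lm lm
  have T: "(\<lambda>b. tgam n m (\<lambda>i. wfn i b) (\<lambda>i. sf i b) (\<lambda>i. Lf i b) \<gamma> j (l b)) \<in> borel_measurable N"
    unfolding tgam_Max[OF m] FR_alt by measurable
  note [measurable] = T
  show ?thesis unfolding Eratio_def Let_def by measurable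
qed




definition Sset :: "nat \<Rightarrow> nat \<Rightarrow> nat set" where "Sset n j = insert (n+j) {1..n}"

definition FRs where
  "FRs n m wv sv Lv j t =
     (\<Sum>i\<in>Sset n j. wv i * Lv i * (if sv i \<le> t then 1 else 0))
      / (1 + real (card {k\<in>{1..m}. k \<noteq> j \<and> sv (n+k) \<le> t}))
     * (real m / (\<Sum>i\<in>Sset n j. wv i))"

definition Ts where
  "Ts n m wv sv Lv \<gamma> j =
     (let T = {t \<in> score_set n m sv. FRs n m wv sv Lv j t \<le> \<gamma>}
      in if T = {} then -\<infinity> else ereal (Max T))"

definition Rk where
  "Rk n m wv sv Lv \<gamma> j k =
     (let t = Ts n m wv sv Lv \<gamma> j;
          num = (if ereal (sv k) \<le> t then 1 else 0) * (\<Sum>i\<in>Sset n j. wv i);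
          den = (\<Sum>i\<in>Sset n j. wv i * Lv i * (if ereal (sv i) \<le> t then 1 else 0))
      in if num = 0 then 0 else if den = 0 then \<infinity> else ereal (num / den))"

definition sw :: "nat \<Rightarrow> nat \<Rightarrow> nat \<Rightarrow> nat" where
  "sw a b i = (if i = a then b else if i = b then a else i)"

lemma sum_Sset: "j \<ge> 1 \<Longrightarrow> (\<Sum>i\<in>Sset n j. F i) = F (n+j) + (\<Sum>i=1..n. F i)"
  unfolding Sset_def by (subst sum.insert) auto

lemma FR_FRs: "j \<ge> 1 \<Longrightarrow> FR n m wv sv Lv j t (Lv (n+j)) = FRs n m wv sv Lv j t"
  unfolding FR_def FRs_def by (simp add: sum_Sset mult.assoc)

lemma tgam_Ts: "j \<ge> 1 \<Longrightarrow> tgam n m wv sv Lv \<gamma> j (Lv (n+j)) = Ts n m wv sv Lv \<gamma> j"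
  unfolding tgam_def Ts_def by (simp add: FR_FRs)

lemma Eratio_Rk: "j \<ge> 1 \<Longrightarrow> Eratio n m wv sv Lv \<gamma> j (Lv (n+j)) = Rk n m wv sv Lv \<gamma> j (n+j)"
  unfolding Eratio_def Rk_def by (simp add: tgam_Ts sum_Sset mult.assoc Let_def)

lemma sw_bij:
  assumes "a \<in> A" "b \<in> A"
  shows "bij_betw (sw a b) A A"
  unfolding bij_betw_def inj_on_def sw_def using assms by (auto simp: image_iff)

lemma sum_sw:
  assumes "a \<in> A" "b \<in> A"
  shows "(\<Sum>i\<in>A. F (sw a b i)) = (\<Sum>i\<in>A. F i)"
  using sum.reindex_bij_betw[OF sw_bij[OF assms], of F] by simp

context
  fixes n m j k :: nat and \<sigma>
  assumes j: "j \<in> {1..m}" and k: "k \<in> Sset n j"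
  defines "\<sigma> \<equiv> sw k (n+j)"
begin

lemma kk: "k \<in> {1..n+m}" "n + j \<in> {1..n+m}" "n+j \<in> Sset n j" using j k by (auto simp: Sset_def)

lemma FRs_sw: "FRs n m (\<lambda>i. wv (\<sigma> i)) (\<lambda>i. sv (\<sigma> i)) (\<lambda>i. Lv (\<sigma> i)) j t = FRs n m wv sv Lv j t"
proof -
  have c: "{k'\<in>{1..m}. k' \<noteq> j \<and> sv (\<sigma> (n+k')) \<le> t} = {k'\<in>{1..m}. k' \<noteq> j \<and> sv (n+k') \<le> t}"
    using k j by (auto simp: \<sigma>_def sw_def Sset_def)
  show ?thesis unfolding FRs_def c
    using sum_sw[OF k kk(3), of "\<lambda>i. wv i * Lv i * (if sv i \<le> t then 1 else 0)"]
          sum_sw[OF k kk(3), of wv] by (simp add: \<sigma>_def)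
qed

lemma score_sw: "score_set n m (\<lambda>i. sv (\<sigma> i)) = score_set n m sv"
proof -
  have "(\<lambda>i. sv (\<sigma> i)) ` {1..n+m} = sv ` (\<sigma> ` {1..n+m})" by auto
  also have "\<sigma> ` {1..n+m} = {1..n+m}" using sw_bij[OF kk(1,2)] unfolding \<sigma>_def bij_betw_def by simp
  finally show ?thesis unfolding score_set_def by simp
qed

lemma Ts_sw: "Ts n m (\<lambda>i. wv (\<sigma> i)) (\<lambda>i. sv (\<sigma> i)) (\<lambda>i. Lv (\<sigma> i)) \<gamma> j = Ts n m wv sv Lv \<gamma> j"
  unfolding Ts_def FRs_sw score_sw ..

lemma Rk_sw: "Rk n m (\<lambda>i. wv (\<sigma> i)) (\<lambda>i. sv (\<sigma> i)) (\<lambda>i. Lv (\<sigma> i)) \<gamma> j (n+j) = Rk n m wv sv Lv \<gamma> j k"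
proof -
  have s: "\<sigma> (n+j) = k" by (simp add: \<sigma>_def sw_def)
  show ?thesis unfolding Rk_def Ts_sw Let_def s
    using sum_sw[OF k kk(3), of "\<lambda>i. wv i * Lv i * (if ereal (sv i) \<le> Ts n m wv sv Lv \<gamma> j then 1 else 0)"]
          sum_sw[OF k kk(3), of wv] by (simp add: \<sigma>_def)
qed

end

lemma key_sum:
  fixes wv sv Lv :: "nat \<Rightarrow> real"
  assumes j: "j \<ge> 1" and wpos: "\<And>i. i \<in> Sset n j \<Longrightarrow> wv i > 0" and Lnn: "\<And>i. i \<in> Sset n j \<Longrightarrow> Lv i \<ge> 0"
  shows "(\<Sum>k\<in>Sset n j. ennreal (wv k) * (ennreal (Lv k) * e2ennreal (Rk n m wv sv Lv \<gamma> j k)))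
         \<le> ennreal (\<Sum>k\<in>Sset n j. wv k)"
proof -
  define t where "t = Ts n m wv sv Lv \<gamma> j"
  define W where "W = (\<Sum>i\<in>Sset n j. wv i)"
  define ind where "ind i = (if ereal (sv i) \<le> t then 1 else (0::real))" for i
  define D where "D = (\<Sum>i\<in>Sset n j. wv i * Lv i * ind i)"
  have fin: "finite (Sset n j)" by (simp add: Sset_def)
  have Wpos: "W > 0" unfolding W_def using wpos fin by (intro sum_pos) (auto simp: Sset_def)
  have R: "Rk n m wv sv Lv \<gamma> j k = (if ind k * W = 0 then 0 else if D = 0 then \<infinity> else ereal (ind k * W / D))" for k
    unfolding Rk_def Let_def t_def[symmetric] W_def[symmetric] D_def ind_def by simp
  have tnn: "\<And>i. i \<in> Sset n j \<Longrightarrow> wv i * Lv i * ind i \<ge> 0"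
    using wpos Lnn unfolding ind_def by (metis less_imp_le mult_nonneg_nonneg mult_zero_right order_refl mult_1_right)
  show ?thesis
  proof (cases "D = 0")
    case True
    have z: "wv i * Lv i * ind i = 0" if "i \<in> Sset n j" for i
      using sum_nonneg_eq_0_iff[OF fin, of "\<lambda>i. wv i * Lv i * ind i"] tnn True that unfolding D_def by blast
    have "ennreal (wv k) * (ennreal (Lv k) * e2ennreal (Rk n m wv sv Lv \<gamma> j k)) = 0" if "k \<in> Sset n j" for k
    proof (cases "ind k = 0")
      case True then show ?thesis by (simp add: R)
    next
      case False
      then have "Lv k = 0" using z[OF that] wpos[OF that] by simp
      then show ?thesis by simp
    qed
    then have "(\<Sum>k\<in>Sset n j. ennreal (wv k) * (ennreal (Lv k) * e2ennreal (Rk n m wv sv Lv \<gamma> j k))) = 0" by (intro sum.neutral ballI) assumption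
    then show ?thesis by simp
  next
    case False
    have "D \<ge> 0" unfolding D_def using tnn by (intro sum_nonneg) auto
    then have Dpos: "D > 0" using False by simp
    have "ennreal (wv k) * (ennreal (Lv k) * e2ennreal (Rk n m wv sv Lv \<gamma> j k)) = ennreal (wv k * Lv k * ind k * W / D)"
      if "k \<in> Sset n j" for k
    proof -
      have "ind k \<ge> 0" by (simp add: ind_def)
      then have "e2ennreal (Rk n m wv sv Lv \<gamma> j k) = ennreal (ind k * W / D)" using False by (simp add: R)
      then show ?thesis using wpos[OF that] Lnn[OF that] \<open>ind k \<ge> 0\<close> Wpos Dpos
        by (simp add: ennreal_mult'[symmetric] ennreal_mult''[symmetric] mult.assoc)
    qed
    then have "(\<Sum>k\<in>Sset n j. ennreal (wv k) * (ennreal (Lv k) * e2ennreal (Rk n m wv sv Lv \<gamma> j k)))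
        = (\<Sum>k\<in>Sset n j. ennreal (wv k * Lv k * ind k * W / D))" by (rule sum.cong[OF refl])
    also have "\<dots> = ennreal (\<Sum>k\<in>Sset n j. wv k * Lv k * ind k * W / D)"
      using tnn Wpos Dpos by (intro sum_ennreal) auto
    also have "(\<Sum>k\<in>Sset n j. wv k * Lv k * ind k * W / D) = D * W / D"
      unfolding D_def by (simp add: sum_divide_distrib sum_distrib_right)
    also have "\<dots> = W" using Dpos by simp
    finally show ?thesis unfolding W_def by simp
  qed
qed




lemma PiM_density_coord:
  fixes D D' :: "nat \<Rightarrow> 'a measure" and \<rho> :: "'a \<Rightarrow> ennreal"
  assumes fin: "finite I" and c: "c \<in> I"
    and pD': "\<And>i. prob_space (D' i)" and pD: "\<And>i. prob_space (D i)"
    and Dc: "D c = density (D' c) \<rho>" and \<rho>m: "\<rho> \<in> borel_measurable (D' c)"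
    and Di: "\<And>i. i \<noteq> c \<Longrightarrow> D i = D' i"
  shows "PiM I D = density (PiM I D') (\<lambda>z. \<rho> (z c))"
proof -
  interpret PD: product_sigma_finite D
    unfolding product_sigma_finite_def using pD prob_space_imp_sigma_finite by blast
  interpret PD': product_sigma_finite D'
    unfolding product_sigma_finite_def using pD' prob_space_imp_sigma_finite by blast
  have setsD: "sets (D i) = sets (D' i)" for i
    using Di Dc by (cases "i = c") auto
  have setsP: "sets (PiM I D') = sets (PiM I D)"
    by (rule sets_PiM_cong) (auto simp: setsD)
  have \<rho>m': "(\<lambda>z. \<rho> (z c)) \<in> borel_measurable (PiM I D')"
    using measurable_compose[OF measurable_component_singleton[OF c, of D'] \<rho>m] .
  show ?thesis
  proof (rule PD.PiM_eqI[symmetric])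
    show "finite I" by fact
    show "sets (density (PiM I D') (\<lambda>z. \<rho> (z c))) = sets (PiM I D)" using setsP by simp
    fix A assume A: "\<And>i. i \<in> I \<Longrightarrow> A i \<in> sets (D i)"
    have A': "\<And>i. i \<in> I \<Longrightarrow> A i \<in> sets (D' i)" using A setsD by auto
    define f where "f i y = (if i = c then \<rho> y * indicator (A c) y else indicator (A i) y :: ennreal)" for i y
    have AS: "Pi\<^sub>E I A \<in> sets (PiM I D')" using A' fin by (intro sets_PiM_I_finite) auto
    have "emeasure (density (PiM I D') (\<lambda>z. \<rho> (z c))) (Pi\<^sub>E I A)
        = (\<integral>\<^sup>+ z. \<rho> (z c) * indicator (Pi\<^sub>E I A) z \<partial>PiM I D')"
      by (rule emeasure_density[OF \<rho>m' AS])
    also have "\<dots> = (\<integral>\<^sup>+ z. (\<Prod>i\<in>I. f i (z i)) \<partial>PiM I D')"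
    proof (rule nn_integral_cong)
      fix z assume z: "z \<in> space (PiM I D')"
      have ext: "\<And>i. i \<notin> I \<Longrightarrow> z i = undefined" using z by (auto simp: space_PiM PiE_def extensional_def)
      have ind: "indicator (Pi\<^sub>E I A) z = (\<Prod>i\<in>I. indicator (A i) (z i) :: ennreal)"
      proof (cases "\<forall>i\<in>I. z i \<in> A i")
        case True
        then have "z \<in> Pi\<^sub>E I A" using ext by (auto simp: PiE_def extensional_def)
        then show ?thesis using True by (simp add: indicator_def)
      next
        case False
        then obtain i where "i \<in> I" "z i \<notin> A i" by auto
        then show ?thesis using fin by (auto simp: indicator_def PiE_def intro!: prod_zero)
      qed
      have "(\<Prod>i\<in>I. f i (z i)) = f c (z c) * (\<Prod>i\<in>I - {c}. f i (z i))"
        using fin c by (simp add: prod.remove)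
      also have "(\<Prod>i\<in>I - {c}. f i (z i)) = (\<Prod>i\<in>I - {c}. indicator (A i) (z i))"
        by (rule prod.cong) (auto simp: f_def)
      also have "f c (z c) * \<dots> = \<rho> (z c) * (indicator (A c) (z c) * (\<Prod>i\<in>I - {c}. indicator (A i) (z i)))"
        by (simp add: f_def mult.assoc)
      also have "indicator (A c) (z c) * (\<Prod>i\<in>I - {c}. indicator (A i) (z i)) = (\<Prod>i\<in>I. indicator (A i) (z i) :: ennreal)"
        using fin c by (simp add: prod.remove)
      finally show "\<rho> (z c) * indicator (Pi\<^sub>E I A) z = (\<Prod>i\<in>I. f i (z i))" using ind by simp
    qed
    also have "\<dots> = (\<Prod>i\<in>I. integral\<^sup>N (D' i) (f i))"
      using fin A' \<rho>m
    proof (intro PD'.product_nn_integral_prod)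
      fix i assume i: "i \<in> I"
      note [measurable] = \<rho>m A'[OF c] A'[OF i]
      show "f i \<in> borel_measurable (D' i)"
      proof (cases "i = c")
        case True then show ?thesis unfolding f_def by simp
      next
        case False then show ?thesis unfolding f_def by simp
      qed
    qed simp
    also have "\<dots> = (\<Prod>i\<in>I. emeasure (D i) (A i))"
    proof (rule prod.cong[OF refl])
      fix i assume i: "i \<in> I"
      show "integral\<^sup>N (D' i) (f i) = emeasure (D i) (A i)"
      proof (cases "i = c")
        case True
        then show ?thesis using A'[OF i] \<rho>m by (simp add: f_def[abs_def] Dc emeasure_density)
      next
        case False
        then show ?thesis using A'[OF i] by (simp add: f_def[abs_def] Di)
      qed
    qed
    finally show "emeasure (density (PiM I D') (\<lambda>z. \<rho> (z c))) (Pi\<^sub>E I A) = (\<Prod>i\<in>I. emeasure (D i) (A i))" .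
  qed
qed




lemma Eratio_cong:
  assumes j: "j \<in> {1..m}"
    and w: "\<And>i. i \<in> {1..n+m} \<Longrightarrow> wv i = wv' i"
    and s: "\<And>i. i \<in> {1..n+m} \<Longrightarrow> sv i = sv' i"
    and L: "\<And>i. i \<in> {1..n+m} \<Longrightarrow> Lv i = Lv' i"
  shows "Eratio n m wv sv Lv \<gamma> j l = Eratio n m wv' sv' Lv' \<gamma> j l"
proof -
  have nj: "n + j \<in> {1..n+m}" using j by auto
  have s1: "(\<Sum>i=1..n. F (wv i) (sv i) (Lv i)) = (\<Sum>i=1..n. F (wv' i) (sv' i) (Lv' i))" for F
    using w s L by (intro sum.cong) auto
  have c: "{k\<in>{1..m}. k \<noteq> j \<and> sv (n+k) \<le> t} = {k\<in>{1..m}. k \<noteq> j \<and> sv' (n+k) \<le> t}" for t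
    using s by auto
  have FR: "FR n m wv sv Lv j t l' = FR n m wv' sv' Lv' j t l'" for t l'
    unfolding FR_def c using s1[of "\<lambda>a b c. a * c * (if b \<le> t then 1 else 0)"] s1[of "\<lambda>a b c. a"]
      w[OF nj] s[OF nj] by simp
  have sc: "score_set n m sv = score_set n m sv'" unfolding score_set_def using s by (intro image_cong) auto
  have tg: "tgam n m wv sv Lv \<gamma> j l' = tgam n m wv' sv' Lv' \<gamma> j l'" for l'
    unfolding tgam_def FR sc ..
  show ?thesis unfolding Eratio_def tg Let_def
    using s1[of "\<lambda>a b c. a * c * (if ereal b \<le> tgam n m wv' sv' Lv' \<gamma> j l then 1 else 0)"] s1[of "\<lambda>a b c. a"]
      w[OF nj] s[OF nj] by simp
qed

lemma Evalue_le:
  assumes "0 \<le> Lv (n+j)" "Lv (n+j) \<le> 1"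
  shows "ennreal (Lv (n+j)) * e2ennreal (Evalue n m wv sv Lv \<gamma> j)
      \<le> ennreal (Lv (n+j)) * e2ennreal (Eratio n m wv sv Lv \<gamma> j (Lv (n+j)))"
proof (cases "(INF l\<in>{0..1}. tgam n m wv sv Lv \<gamma> j l) = -\<infinity>")
  case True then show ?thesis by (simp add: Evalue_def)
next
  case False
  have "(INF l\<in>{0..1}. Eratio n m wv sv Lv \<gamma> j l) \<le> Eratio n m wv sv Lv \<gamma> j (Lv (n+j))"
    using assms by (intro INF_lower) auto
  then show ?thesis using False unfolding Evalue_def
    by (simp add: mult_left_mono e2ennreal_mono)
qed

lemma Evalue_nonneg:
  assumes "wv (n+j) > 0" "\<And>i. i \<in> {1..n} \<Longrightarrow> wv i > 0" "\<And>i. i \<in> {1..n} \<Longrightarrow> Lv i \<ge> 0"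
  shows "0 \<le> Evalue n m wv sv Lv \<gamma> j"
proof -
  have "0 \<le> Eratio n m wv sv Lv \<gamma> j l" if l: "l \<in> {0..1}" for l
  proof -
    define t where "t = tgam n m wv sv Lv \<gamma> j l"
    have wnn: "\<And>i. i \<in> {1..n} \<Longrightarrow> 0 \<le> wv i" using assms(2) by (simp add: less_imp_le)
    have W: "0 \<le> wv (n+j) + (\<Sum>i=1..n. wv i)" using assms by (intro add_nonneg_nonneg sum_nonneg) (auto intro: less_imp_le)
    have den: "0 \<le> wv (n+j) * l * (if ereal (sv (n+j)) \<le> t then 1 else 0)
                + (\<Sum>i=1..n. wv i * Lv i * (if ereal (sv i) \<le> t then 1 else 0))"
      using assms(1,3) wnn l by (intro add_nonneg_nonneg sum_nonneg) (auto intro!: mult_nonneg_nonneg)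
    show ?thesis unfolding Eratio_def Let_def t_def[symmetric]
      using W den by (auto intro!: divide_nonneg_nonneg)
  qed
  then show ?thesis unfolding Evalue_def by (auto intro: INF_greatest)
qed

lemma PiM_marginal:
  fixes D' :: "nat \<Rightarrow> 'a measure"
  assumes fin: "finite I" and k: "k \<in> I" and pD': "\<And>i. prob_space (D' i)"
    and h: "h \<in> borel_measurable (D' k)"
  shows "(\<integral>\<^sup>+ z. h (z k) \<partial>PiM I D') = integral\<^sup>N (D' k) h"
proof -
  interpret PD': product_sigma_finite D'
    unfolding product_sigma_finite_def using pD' prob_space_imp_sigma_finite by blast
  define f where "f i = (if i = k then h else (\<lambda>_. 1::ennreal))" for i
  have "(\<integral>\<^sup>+ z. h (z k) \<partial>PiM I D') = (\<integral>\<^sup>+ z. (\<Prod>i\<in>I. f i (z i)) \<partial>PiM I D')"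
  proof (rule nn_integral_cong)
    fix z
    have "(\<Prod>i\<in>I. f i (z i)) = f k (z k) * (\<Prod>i\<in>I-{k}. f i (z i))" using fin k by (simp add: prod.remove)
    also have "(\<Prod>i\<in>I-{k}. f i (z i)) = 1" by (rule prod.neutral) (auto simp: f_def)
    finally show "h (z k) = (\<Prod>i\<in>I. f i (z i))" by (simp add: f_def)
  qed
  also have "\<dots> = (\<Prod>i\<in>I. integral\<^sup>N (D' i) (f i))"
    using fin h by (intro PD'.product_nn_integral_prod) (auto simp: f_def)
  also have "\<dots> = integral\<^sup>N (D' k) (f k) * (\<Prod>i\<in>I-{k}. integral\<^sup>N (D' i) (f i))"
    using fin k by (simp add: prod.remove)
  also have "(\<Prod>i\<in>I-{k}. integral\<^sup>N (D' i) (f i)) = 1"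
  proof (rule prod.neutral, intro ballI)
    fix i assume "i \<in> I - {k}"
    then show "integral\<^sup>N (D' i) (f i) = 1"
      using prob_space.emeasure_space_1[OF pD'[of i]] by (simp add: f_def)
  qed
  finally show ?thesis by (simp add: f_def)
qed

lemma PiM_swap:
  fixes D' :: "nat \<Rightarrow> 'a measure"
  assumes a: "a \<in> I" and b: "b \<in> I" and pD': "\<And>i. prob_space (D' i)" and ab: "D' a = D' b"
  shows "distr (PiM I D') (PiM I D') (\<lambda>z. \<lambda>i\<in>I. z (sw a b i)) = PiM I D'"
proof -
  have eq: "(\<Pi>\<^sub>M i\<in>I. D' (sw a b i)) = PiM I D'"
    by (rule PiM_cong) (auto simp: sw_def ab)
  have "distr (PiM I D') (\<Pi>\<^sub>M i\<in>I. D' (sw a b i)) (\<lambda>z. \<lambda>i\<in>I. z (sw a b i)) = (\<Pi>\<^sub>M i\<in>I. D' (sw a b i))"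
    using sw_bij[OF a b] pD' by (intro distr_PiM_reindex) (auto simp: bij_betw_def)
  then show ?thesis unfolding eq .
qed




theorem theorem6p2:
  fixes M :: "'o measure"
    and MX :: "'x measure" and MY :: "'y measure"
    and P :: "('x \<times> 'y) measure"
    and X :: "nat \<Rightarrow> 'o \<Rightarrow> 'x" and Y :: "nat \<Rightarrow> 'o \<Rightarrow> 'y"
    and w :: "'x \<Rightarrow> real" and s :: "'x \<Rightarrow> real"
    and risk :: "'f \<Rightarrow> 'x \<Rightarrow> 'y \<Rightarrow> real" and f :: 'f
    and n m j :: nat and \<gamma> :: real
  assumes "prob_space M"
    and "prob_space P" and "sets P = sets (MX \<Otimes>\<^sub>M MY)"
    and w_meas: "w \<in> borel_measurable MX"
    and w_pos: "\<forall>x\<in>space MX. 0 < w x"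
    and Q_prob: "prob_space (density P (\<lambda>z. ennreal (w (fst z))))"
    and s_meas: "s \<in> borel_measurable MX"
    and s_range: "\<forall>x\<in>space MX. 0 \<le> s x \<and> s x \<le> 1"
    and risk_meas: "(\<lambda>z. risk f (fst z) (snd z)) \<in> borel_measurable (MX \<Otimes>\<^sub>M MY)"
    and risk_range: "\<forall>x\<in>space MX. \<forall>y\<in>space MY. 0 \<le> risk f x y \<and> risk f x y \<le> 1"
    and X_meas: "\<forall>i\<in>{1..n+m}. X i \<in> measurable M MX"
    and Y_meas: "\<forall>i\<in>{1..n+m}. Y i \<in> measurable M MY"
    and indep: "prob_space.indep_vars M (\<lambda>i. MX \<Otimes>\<^sub>M MY) (\<lambda>i \<omega>. (X i \<omega>, Y i \<omega>)) {1..n+m}"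
    and distP: "\<forall>i\<in>{1..n}. distr M (MX \<Otimes>\<^sub>M MY) (\<lambda>\<omega>. (X i \<omega>, Y i \<omega>)) = P"
    and distQ: "\<forall>i\<in>{n+1..n+m}. distr M (MX \<Otimes>\<^sub>M MY) (\<lambda>\<omega>. (X i \<omega>, Y i \<omega>))
                   = density P (\<lambda>z. ennreal (w (fst z)))"
    and gamma: "0 < \<gamma>" "\<gamma> < 1"
    and j: "j \<in> {1..m}"
  shows "(\<forall>\<omega>\<in>space M.
            0 \<le> Evalue n m (\<lambda>i. w (X i \<omega>)) (\<lambda>i. s (X i \<omega>))
                   (\<lambda>i. risk f (X i \<omega>) (Y i \<omega>)) \<gamma> j)
       \<and> (\<integral>\<^sup>+ \<omega>. ennreal (risk f (X (n+j) \<omega>) (Y (n+j) \<omega>))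
              * e2ennreal (Evalue n m (\<lambda>i. w (X i \<omega>)) (\<lambda>i. s (X i \<omega>))
                   (\<lambda>i. risk f (X i \<omega>) (Y i \<omega>)) \<gamma> j) \<partial>M) \<le> 1"
proof -
  interpret M: prob_space M by fact
  define I where "I = {1..n+m}"
  have m1: "m \<ge> 1" "j \<ge> 1" using j by auto
  have nj: "n + j \<in> I" using j by (auto simp: I_def)
  have SI: "Sset n j \<subseteq> I" using j by (auto simp: Sset_def I_def)
  have finI: "finite I" by (simp add: I_def)
  define K where "K = MX \<Otimes>\<^sub>M MY"
  define \<rho> where "\<rho> y = ennreal (w (fst y))" for y :: "'x \<times> 'y"
  define Q where "Q = density P \<rho>"
  define D where "D i = (if i \<le> n then P else Q)" for i
  define D' where "D' i = (if i \<le> n \<or> i = n+j then P else Q)" for i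
  have setsP: "sets P = sets K" using assms(3) by (simp add: K_def)
  have setsQ: "sets Q = sets K" using setsP by (simp add: Q_def)
  have setsD: "sets (D i) = sets K" for i using setsP setsQ by (simp add: D_def)
  have setsD': "sets (D' i) = sets K" for i using setsP setsQ by (simp add: D'_def)
  have pQ: "prob_space Q" using Q_prob by (simp add: Q_def \<rho>_def[abs_def])
  have pD: "prob_space (D i)" for i using pQ assms(2) by (simp add: D_def)
  have pD': "prob_space (D' i)" for i using pQ assms(2) by (simp add: D'_def)
  have spK: "space K = space MX \<times> space MY" by (simp add: K_def space_pair_measure)
  define wz where "wz z i = w (fst (z i))" for z :: "nat \<Rightarrow> 'x \<times> 'y" and i
  define sz where "sz z i = s (fst (z i))" for z :: "nat \<Rightarrow> 'x \<times> 'y" and i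
  define Lz where "Lz z i = risk f (fst (z i)) (snd (z i))" for z :: "nat \<Rightarrow> 'x \<times> 'y" and i
  define g where "g z = ennreal (Lz z (n+j)) * e2ennreal (Eratio n m (wz z) (sz z) (Lz z) \<gamma> j (Lz z (n+j)))" for z
  
  have compm: "(\<lambda>z. h (z i)) \<in> borel_measurable (PiM I (\<lambda>_. K))" if h: "h \<in> borel_measurable K" for h :: "'x \<times> 'y \<Rightarrow> real" and i
  proof (cases "i \<in> I")
    case True
    then show ?thesis using measurable_compose[OF measurable_component_singleton[OF True, of "\<lambda>_. K"] h] by simp
  next
    case False
    have "(\<lambda>z. h (z i)) \<in> borel_measurable (PiM I (\<lambda>_. K)) \<longleftrightarrow> (\<lambda>z. h undefined) \<in> borel_measurable (PiM I (\<lambda>_. K))"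
      by (rule measurable_cong) (use False in \<open>auto simp: space_PiM PiE_def extensional_def\<close>)
    then show ?thesis by simp
  qed
  have wK: "(\<lambda>y. w (fst y)) \<in> borel_measurable K" using w_meas unfolding K_def by measurable
  have sK: "(\<lambda>y. s (fst y)) \<in> borel_measurable K" using s_meas unfolding K_def by measurable
  have LK: "(\<lambda>y. risk f (fst y) (snd y)) \<in> borel_measurable K" using risk_meas unfolding K_def .
  have gm0: "g \<in> borel_measurable (PiM I (\<lambda>_. K))"
  proof -
    have "(\<lambda>z. Eratio n m (\<lambda>i. wz z i) (\<lambda>i. sz z i) (\<lambda>i. Lz z i) \<gamma> j (Lz z (n+j))) \<in> borel_measurable (PiM I (\<lambda>_. K))"
      by (rule Eratio_meas[OF m1(1)]) (auto simp: wz_def sz_def Lz_def intro!: compm wK sK LK)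
    then have [measurable]: "(\<lambda>z. Eratio n m (wz z) (sz z) (Lz z) \<gamma> j (Lz z (n+j))) \<in> borel_measurable (PiM I (\<lambda>_. K))"
      by simp
    have [measurable]: "(\<lambda>z. Lz z (n+j)) \<in> borel_measurable (PiM I (\<lambda>_. K))"
      unfolding Lz_def by (rule compm[OF LK])
    show ?thesis unfolding g_def by measurable
  qed
  have setsPiD': "sets (PiM I D') = sets (PiM I (\<lambda>_. K))" by (rule sets_PiM_cong) (auto simp: setsD')
  have gm: "g \<in> borel_measurable (PiM I D')" by (subst measurable_cong_sets[OF setsPiD' refl]) (rule gm0)
  have spD': "space (D' i) = space K" for i using setsD' by (rule sets_eq_imp_space_eq)
  
  define Z where "Z \<omega> = (\<lambda>i\<in>I. (X i \<omega>, Y i \<omega>))" for \<omega>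
  have rv: "(\<lambda>\<omega>. (X i \<omega>, Y i \<omega>)) \<in> measurable M K" if "i \<in> I" for i
    using X_meas Y_meas that unfolding K_def I_def by (intro measurable_Pair) auto
  have Zm: "Z \<in> measurable M (PiM I (\<lambda>_. K))"
    unfolding Z_def using rv by (intro measurable_restrict) auto
  have XY: "X i \<omega> \<in> space MX" "Y i \<omega> \<in> space MY" if "i \<in> I" "\<omega> \<in> space M" for i \<omega>
  proof -
    show "X i \<omega> \<in> space MX" using that X_meas unfolding I_def by (meson measurable_space)
    show "Y i \<omega> \<in> space MY" using that Y_meas unfolding I_def by (meson measurable_space)
  qed
  
  have nonneg: "\<forall>\<omega>\<in>space M. 0 \<le> Evalue n m (\<lambda>i. w (X i \<omega>)) (\<lambda>i. s (X i \<omega>))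
                   (\<lambda>i. risk f (X i \<omega>) (Y i \<omega>)) \<gamma> j"
  proof
    fix \<omega> assume \<omega>: "\<omega> \<in> space M"
    have "i \<in> {1..n} \<Longrightarrow> i \<in> I" for i by (auto simp: I_def)
    then show "0 \<le> Evalue n m (\<lambda>i. w (X i \<omega>)) (\<lambda>i. s (X i \<omega>)) (\<lambda>i. risk f (X i \<omega>) (Y i \<omega>)) \<gamma> j"
      using XY[OF _ \<omega>] nj w_pos risk_range by (intro Evalue_nonneg) auto
  qed
  have pw: "ennreal (risk f (X (n+j) \<omega>) (Y (n+j) \<omega>))
              * e2ennreal (Evalue n m (\<lambda>i. w (X i \<omega>)) (\<lambda>i. s (X i \<omega>))
                   (\<lambda>i. risk f (X i \<omega>) (Y i \<omega>)) \<gamma> j) \<le> g (Z \<omega>)" if \<omega>: "\<omega> \<in> space M" for \<omega>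
  proof -
    have r: "0 \<le> risk f (X (n+j) \<omega>) (Y (n+j) \<omega>)" "risk f (X (n+j) \<omega>) (Y (n+j) \<omega>) \<le> 1"
      using XY[OF nj \<omega>] risk_range by auto
    have e: "Eratio n m (\<lambda>i. w (X i \<omega>)) (\<lambda>i. s (X i \<omega>)) (\<lambda>i. risk f (X i \<omega>) (Y i \<omega>)) \<gamma> j l
          = Eratio n m (wz (Z \<omega>)) (sz (Z \<omega>)) (Lz (Z \<omega>)) \<gamma> j l" for l
      by (rule Eratio_cong[OF j]) (auto simp: wz_def sz_def Lz_def Z_def I_def)
    have l: "Lz (Z \<omega>) (n+j) = risk f (X (n+j) \<omega>) (Y (n+j) \<omega>)" using nj by (simp add: Lz_def Z_def)
    show ?thesis
      unfolding g_def l e[symmetric] using Evalue_le[where Lv = "\<lambda>i. risk f (X i \<omega>) (Y i \<omega>)" and m=m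
        and wv = "\<lambda>i. w (X i \<omega>)" and sv = "\<lambda>i. s (X i \<omega>)" and \<gamma>=\<gamma>, OF r] by simp
  qed
  
  have distZ: "distr M (PiM I (\<lambda>_. K)) Z = PiM I D"
  proof -
    have "distr M (PiM I (\<lambda>_. K)) Z = (\<Pi>\<^sub>M i\<in>I. distr M K (\<lambda>\<omega>. (X i \<omega>, Y i \<omega>)))"
      unfolding Z_def
      using M.indep_vars_iff_distr_eq_PiM'[where I=I and M'="\<lambda>_. K" and X="\<lambda>i \<omega>. (X i \<omega>, Y i \<omega>)"] rv indep nj
      unfolding K_def I_def by auto
    also have "\<dots> = PiM I D"
    proof (rule PiM_cong[OF refl])
      fix i assume i: "i \<in> I"
      show "distr M K (\<lambda>\<omega>. (X i \<omega>, Y i \<omega>)) = D i"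
      proof (cases "i \<le> n")
        case True then show ?thesis using i distP by (auto simp: D_def K_def I_def)
      next
        case False then show ?thesis using i distQ
          by (auto simp: D_def K_def I_def Q_def \<rho>_def[abs_def])
      qed
    qed
    finally show ?thesis .
  qed
  have \<rho>mK: "\<rho> \<in> borel_measurable K" unfolding \<rho>_def using wK by measurable
  have \<rho>m: "\<rho> \<in> borel_measurable (D' i)" for i using \<rho>mK measurable_cong_sets[OF setsD' refl] by blast
  have dens: "PiM I D = density (PiM I D') (\<lambda>z. \<rho> (z (n+j)))"
    using m1 \<rho>m[of "n+j"] by (intro PiM_density_coord[OF finI nj pD' pD]) (auto simp: D_def D'_def Q_def)
  have \<rho>m': "(\<lambda>z. \<rho> (z (n+j))) \<in> borel_measurable (PiM I D')"
    using measurable_compose[OF measurable_component_singleton[OF nj, of D'] \<rho>m] .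
  define F where "F z = \<rho> (z (n+j)) * g z" for z
  have Fm: "F \<in> borel_measurable (PiM I D')" unfolding F_def using \<rho>m' gm by measurable
  have step1: "(\<integral>\<^sup>+ \<omega>. g (Z \<omega>) \<partial>M) = integral\<^sup>N (PiM I D') F"
  proof -
    have gmD: "g \<in> borel_measurable (distr M (PiM I (\<lambda>_. K)) Z)"
      using gm0 by simp
    have "(\<integral>\<^sup>+ \<omega>. g (Z \<omega>) \<partial>M) = integral\<^sup>N (distr M (PiM I (\<lambda>_. K)) Z) g"
      by (rule nn_integral_distr[OF Zm gmD, symmetric])
    also have "\<dots> = integral\<^sup>N (density (PiM I D') (\<lambda>z. \<rho> (z (n+j)))) g"
      unfolding distZ dens ..
    also have "\<dots> = integral\<^sup>N (PiM I D') F"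
      unfolding F_def by (rule nn_integral_density[OF \<rho>m' gm])
    finally show ?thesis .
  qed
  
  define \<tau> where "\<tau> k z = (\<lambda>i\<in>I. z (sw k (n+j) i))" for k and z :: "nat \<Rightarrow> 'x \<times> 'y"
  have swI: "sw k (n+j) i \<in> I" if "k \<in> Sset n j" "i \<in> I" for k i
    using that SI nj by (auto simp: sw_def)
  have \<tau>m: "\<tau> k \<in> measurable (PiM I D') (PiM I D')" if k: "k \<in> Sset n j" for k
    unfolding \<tau>_def
  proof (intro measurable_restrict)
    fix i assume i: "i \<in> I"
    have "(\<lambda>z. z (sw k (n+j) i)) \<in> measurable (PiM I D') (D' (sw k (n+j) i))"
      by (rule measurable_component_singleton[OF swI[OF k i]])
    then show "(\<lambda>z. z (sw k (n+j) i)) \<in> measurable (PiM I D') (D' i)"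
      using measurable_cong_sets[OF refl, of "D' (sw k (n+j) i)" "D' i" "PiM I D'"] setsD' by simp
  qed
  have swap: "integral\<^sup>N (PiM I D') F = (\<integral>\<^sup>+ z. F (\<tau> k z) \<partial>PiM I D')" if k: "k \<in> Sset n j" for k
  proof -
    have kI: "k \<in> I" using k SI by auto
    have eqk: "D' k = D' (n+j)" using k by (auto simp: D'_def Sset_def)
    have d: "distr (PiM I D') (PiM I D') (\<tau> k) = PiM I D'"
      unfolding \<tau>_def by (rule PiM_swap[OF kI nj pD' eqk])
    have FmD: "F \<in> borel_measurable (distr (PiM I D') (PiM I D') (\<tau> k))" using Fm by simp
    have "integral\<^sup>N (PiM I D') F = integral\<^sup>N (distr (PiM I D') (PiM I D') (\<tau> k)) F" unfolding d ..
    also have "\<dots> = (\<integral>\<^sup>+ z. F (\<tau> k z) \<partial>PiM I D')" by (rule nn_integral_distr[OF \<tau>m[OF k] FmD])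
    finally show ?thesis .
  qed
  have zsp: "z i \<in> space MX \<times> space MY" if "z \<in> space (PiM I D')" "i \<in> I" for z i
    using that spD' spK by (auto simp: space_PiM)
  have ident: "F (\<tau> k z) = ennreal (wz z k) * (ennreal (Lz z k) * e2ennreal (Rk n m (wz z) (sz z) (Lz z) \<gamma> j k))"
    if k: "k \<in> Sset n j" and z: "z \<in> space (PiM I D')" for k z
  proof -
    define \<sigma> where "\<sigma> = sw k (n+j)"
    have s: "\<sigma> (n+j) = k" by (simp add: \<sigma>_def sw_def)
    have t: "\<tau> k z (n+j) = z k" using nj s by (simp add: \<tau>_def \<sigma>_def)
    have e: "Eratio n m (wz (\<tau> k z)) (sz (\<tau> k z)) (Lz (\<tau> k z)) \<gamma> j l
        = Eratio n m (\<lambda>i. wz z (\<sigma> i)) (\<lambda>i. sz z (\<sigma> i)) (\<lambda>i. Lz z (\<sigma> i)) \<gamma> j l" for l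
      by (rule Eratio_cong[OF j]) (auto simp: wz_def sz_def Lz_def \<tau>_def \<sigma>_def I_def)
    have r: "Eratio n m (\<lambda>i. wz z (\<sigma> i)) (\<lambda>i. sz z (\<sigma> i)) (\<lambda>i. Lz z (\<sigma> i)) \<gamma> j (Lz z (\<sigma> (n+j)))
        = Rk n m (wz z) (sz z) (Lz z) \<gamma> j k"
      using Eratio_Rk[OF m1(2), of n m "\<lambda>i. wz z (\<sigma> i)" "\<lambda>i. sz z (\<sigma> i)" "\<lambda>i. Lz z (\<sigma> i)" \<gamma>]
        Rk_sw[OF j k, of "wz z" "sz z" "Lz z" \<gamma>] unfolding \<sigma>_def by simp
    show ?thesis
      unfolding F_def g_def t e using r s
      by (simp add: \<rho>_def wz_def Lz_def t)
  qed
  have finS: "finite (Sset n j)" by (simp add: Sset_def)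
  have cardS: "card (Sset n j) = n + 1" using m1 by (simp add: Sset_def)
  have key: "(\<Sum>k\<in>Sset n j. F (\<tau> k z)) \<le> (\<Sum>k\<in>Sset n j. ennreal (wz z k))"
    if z: "z \<in> space (PiM I D')" for z
  proof -
    have "(\<Sum>k\<in>Sset n j. F (\<tau> k z))
        = (\<Sum>k\<in>Sset n j. ennreal (wz z k) * (ennreal (Lz z k) * e2ennreal (Rk n m (wz z) (sz z) (Lz z) \<gamma> j k)))"
      using ident z by (intro sum.cong) auto
    also have "\<dots> \<le> ennreal (\<Sum>k\<in>Sset n j. wz z k)"
    proof (rule key_sum[OF m1(2)])
      fix i assume i: "i \<in> Sset n j"
      then have "z i \<in> space MX \<times> space MY" using zsp[OF z] SI by auto
      then show "0 < wz z i" "0 \<le> Lz z i" using w_pos risk_range by (auto simp: wz_def Lz_def)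
    qed
    also have "\<dots> = (\<Sum>k\<in>Sset n j. ennreal (wz z k))"
    proof -
      have "\<And>k. k \<in> Sset n j \<Longrightarrow> 0 \<le> wz z k"
        using zsp[OF z] SI w_pos by (force simp: wz_def intro: less_imp_le)
      then show ?thesis by (simp add: sum_ennreal)
    qed
    finally show ?thesis .
  qed
  have int1: "(\<integral>\<^sup>+ z. ennreal (wz z k) \<partial>PiM I D') = 1" if k: "k \<in> Sset n j" for k
  proof -
    have kI: "k \<in> I" using k SI by auto
    have Pk: "D' k = P" using k by (auto simp: D'_def Sset_def)
    have "(\<integral>\<^sup>+ z. ennreal (wz z k) \<partial>PiM I D') = (\<integral>\<^sup>+ z. \<rho> (z k) \<partial>PiM I D')"
      by (simp add: wz_def \<rho>_def)
    also have "\<dots> = integral\<^sup>N (D' k) \<rho>" by (rule PiM_marginal[OF finI kI pD' \<rho>m])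
    also have "\<dots> = (\<integral>\<^sup>+ x. \<rho> x * 1 \<partial>P)" using Pk by simp
    also have "\<dots> = integral\<^sup>N Q (\<lambda>_. 1)" unfolding Q_def
      using \<rho>m[of k] Pk by (intro nn_integral_density[symmetric]) auto
    also have "\<dots> = 1" using prob_space.emeasure_space_1[OF pQ] by simp
    finally show ?thesis .
  qed
  have Fle: "integral\<^sup>N (PiM I D') F \<le> 1"
  proof -
    have "of_nat (n+1) * integral\<^sup>N (PiM I D') F = (\<Sum>k\<in>Sset n j. integral\<^sup>N (PiM I D') F)"
      using cardS by simp
    also have "\<dots> = (\<Sum>k\<in>Sset n j. (\<integral>\<^sup>+ z. F (\<tau> k z) \<partial>PiM I D'))"
      using swap by (intro sum.cong) auto
    also have "\<dots> = (\<integral>\<^sup>+ z. (\<Sum>k\<in>Sset n j. F (\<tau> k z)) \<partial>PiM I D')"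
      using measurable_comp[OF \<tau>m Fm] by (intro nn_integral_sum[symmetric]) (auto simp: o_def)
    also have "\<dots> \<le> (\<integral>\<^sup>+ z. (\<Sum>k\<in>Sset n j. ennreal (wz z k)) \<partial>PiM I D')"
      using key by (intro nn_integral_mono) auto
    also have "\<dots> = (\<Sum>k\<in>Sset n j. (\<integral>\<^sup>+ z. ennreal (wz z k) \<partial>PiM I D'))"
    proof (intro nn_integral_sum)
      fix k assume "k \<in> Sset n j"
      then have kI: "k \<in> I" using SI by auto
      show "(\<lambda>z. ennreal (wz z k)) \<in> borel_measurable (PiM I D')"
        unfolding wz_def using measurable_compose[OF measurable_component_singleton[OF kI, of D'] \<rho>m]
        by (simp add: \<rho>_def)
    qed
    also have "\<dots> = (\<Sum>k\<in>Sset n j. 1)" using int1 by (intro sum.cong) auto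
    also have "\<dots> = of_nat (n+1) * 1" using cardS by simp
    finally have "of_nat (n+1) * integral\<^sup>N (PiM I D') F \<le> of_nat (n+1) * (1::ennreal)" .
    then show ?thesis by (subst (asm) ennreal_mult_le_mult_iff) auto
  qed
  have "(\<integral>\<^sup>+ \<omega>. ennreal (risk f (X (n+j) \<omega>) (Y (n+j) \<omega>))
              * e2ennreal (Evalue n m (\<lambda>i. w (X i \<omega>)) (\<lambda>i. s (X i \<omega>))
                   (\<lambda>i. risk f (X i \<omega>) (Y i \<omega>)) \<gamma> j) \<partial>M) \<le> (\<integral>\<^sup>+ \<omega>. g (Z \<omega>) \<partial>M)"
    using pw by (intro nn_integral_mono) auto
  also have "\<dots> \<le> 1" using step1 Fle by simp
  finally show ?thesis using nonneg by blast
qed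


end
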